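(* Let $q\in(0,1)$ and consider an SC6V model on a skew domain $P-Q$. Let $v=(a,b)$ be a lattice vertex inside $P-Q$ with spectral parameter $z$, and set $v_{\nearrow}=(a+\frac12,b+\frac12)$, $v_{\searrow}=(a+\frac12,b-\frac12)$, $v_{\swarrow}=(a-\frac12,b-\frac12)$, $v_{\nwarrow}=(a-\frac12,b+\frac12)$. Then for any colors $c_1\le\dots\le c_r$ and any configuration $\Sigma^0$, $$\mathbb E\Big[q^{\sum_{t=1}^rh^{v_\nearrow}_{>c_t}(\Sigma)}\,\Big|\,\Sigma_{\swarrow v}=\Sigma^0_{\swarrow v}\Big]=\frac{q-q^rz}{q-z}q^{\sum_{t=1}^rh^{v_\searrow}_{>c_t}(\Sigma^0)}+\frac{qz-1}{q-z}\sum_{i=0}^{r-1}q^{i+\sum_{t\ne i+1}h^{v_\searrow}_{>c_t}(\Sigma^0)+h^{v_\swarrow}_{>c_{i+1}}(\Sigma^0)}+\frac{1-z}{q-z}\sum_{i=0}^{r-1}q^{i+\sum_{t\ne i+1}h^{v_\searrow}_{>c_t}(\Sigma^0)+h^{v_\nwarrow}_{>c_{i+1}}(\Sigma^0)},$$ i.e. in the $i$-th summand of the two sums the $(i+1)$-st point $v_\searrow$ is replaced by $v_\swarrow$, respectively $v_\nwarrow$.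
   Context: SC6V weights: colors $\{0,\dots,n\}$ ($0$ = no path); a vertex with incoming bottom $i$, left $j$, outgoing top $k$, right $l$ has weight $R_z(i,j;k,l)$ where, for $0\le i<j\le n$: $R_z(i,i;i,i)=1$, $R_z(j,i;j,i)=\frac{q(z-1)}{z-q}$, $R_z(j,i;i,j)=\frac{z(1-q)}{z-q}$, $R_z(i,j;i,j)=\frac{z-1}{z-q}$, $R_z(i,j;j,i)=\frac{1-q}{z-q}$, others $0$. Setting: lattice vertices $(a,b)$ ($a$ column, $b$ row), dual points in $(\mathbb{Z}+\frac12)^2$. $Q\le P$ are up-left paths (steps $(-1,0)$ or $(0,+1)$) with common endpoints, $Q$ weakly down-left of $P$; $P-Q$ is the set of lattice vertices between them with adjacent edges. Incoming edges (those crossing steps of $Q$) are colored by a weakly increasing coloring of the steps of $Q$ (in order from its first point $Q_0$). Each row and column has a rapidity; a vertex's spectral parameter is (row rapidity)/(column rapidity). The model is the (possibly complex-valued) probability measure on configurations (edge colorings consistent with the boundary) with weight the product of vertex weights. Height function: $h^{Q_0}_{>c}=0$; if the edge separating $(\alpha,\beta)$ and $(\alpha+1,\beta)$ has color $i$ then $h^{(\alpha+1,\beta)}_{>c}=h^{(\alpha,\beta)}_{>c}-\mathbb 1_{i>c}$; if the edge separating $(\alpha,\beta)$ and $(\alpha,\beta+1)$ has color $i$ then $h^{(\alpha,\beta+1)}_{>c}=h^{(\alpha,\beta)}_{>c}+\mathbb 1_{i>c}$. $\Sigma_{\swarrow v}$ denotes the restriction of a configuration $\Sigma$ to the skew domain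 $P_{\swarrow v}-Q$, where $P_{\swarrow v}$ is the maximal up-left path with $Q\le P_{\swarrow v}\le P$ such that $v$ is not inside $P_{\swarrow v}-Q$; equivalently, the restriction to the vertices of $P-Q$ lying weakly below or weakly to the left of $v$ other than those with column $\ge a$ and row $\ge b$, together with their edges. *)

theory Defs
  imports Complex_Main
begin

text \<open>Lattice vertices are pairs (a,b) of integers (column, row).
A dual point (x + 1/2, y + 1/2) is encoded by the integer pair (x,y).
Edges: Ve (a,b) is the vertical edge entering vertex (a,b) from below (its bottom
edge); He (a,b) is the horizontal edge entering vertex (a,b) from the left.
So the top edge of (a,b) is Ve (a,b+1) and its right edge is He (a+1,b).\<close>

datatype edge = Ve "int \<times> int" | He "int \<times> int"

type_synonym config = "edge \<Rightarrow> nat"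

definition up_left_path :: "(int \<times> int) list \<Rightarrow> bool" where
  "up_left_path R \<longleftrightarrow> R \<noteq> [] \<and>
     (\<forall>k. Suc k < length R \<longrightarrow>
        (R ! Suc k = (fst (R ! k) - 1, snd (R ! k)) \<or> R ! Suc k = (fst (R ! k), snd (R ! k) + 1)))"

definition path_le :: "(int \<times> int) list \<Rightarrow> (int \<times> int) list \<Rightarrow> bool" where
  "path_le Q P \<longleftrightarrow> up_left_path Q \<and> up_left_path P \<and> hd Q = hd P \<and> last Q = last P \<and>
     (\<forall>x\<in>set Q. \<exists>y\<in>set P. fst x \<le> fst y \<and> snd x \<le> snd y)"

text \<open>The lattice vertices of the skew domain P - Q: top-right corner weakly
below-left of P and bottom-left corner weakly above-right of Q.\<close>
definition skew_domain :: "(int \<times> int) list \<Rightarrow> (int \<times> int) list \<Rightarrow> (int \<times> int) set" where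
  "skew_domain Q P = {(a, b). (\<exists>p\<in>set P. a \<le> fst p \<and> b \<le> snd p) \<and>
                              (\<exists>p\<in>set Q. fst p \<le> a - 1 \<and> snd p \<le> b - 1)}"

definition cross_edge :: "int \<times> int \<Rightarrow> int \<times> int \<Rightarrow> edge" where
  "cross_edge x y = (if fst y = fst x - 1 then Ve (fst x, snd x + 1) else He (fst x + 1, snd x + 1))"

definition qedge :: "(int \<times> int) list \<Rightarrow> nat \<Rightarrow> edge" where
  "qedge Q k = cross_edge (Q ! k) (Q ! Suc k)"

definition adj_edges :: "(int \<times> int) set \<Rightarrow> edge set" where
  "adj_edges S = (\<Union>(a, b)\<in>S. {Ve (a, b), He (a, b), Ve (a, b + 1), He (a + 1, b)})"

definition boundary_edges :: "(int \<times> int) list \<Rightarrow> edge set" where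
  "boundary_edges Q = {qedge Q k | k. Suc k < length Q}"

definition dom_edges :: "(int \<times> int) list \<Rightarrow> (int \<times> int) list \<Rightarrow> edge set" where
  "dom_edges Q P = adj_edges (skew_domain Q P) \<union> boundary_edges Q"

text \<open>Configurations: colorings in {0..n} of the edges of the domain, consistent with
the boundary coloring col of the steps of Q (all other edges get the dummy value 0).\<close>
definition configs :: "nat \<Rightarrow> (int \<times> int) list \<Rightarrow> (int \<times> int) list \<Rightarrow> nat list \<Rightarrow> config set" where
  "configs n Q P col = {\<sigma>. (\<forall>e. e \<notin> dom_edges Q P \<longrightarrow> \<sigma> e = 0) \<and> (\<forall>e. \<sigma> e \<le> n) \<and>
       (\<forall>k. Suc k < length Q \<longrightarrow> \<sigma> (qedge Q k) = col ! k)}"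

text \<open>SC6V weight R_z(i,j;k,l): incoming bottom i, left j, outgoing top k, right l.\<close>
definition Rw :: "complex \<Rightarrow> complex \<Rightarrow> nat \<Rightarrow> nat \<Rightarrow> nat \<Rightarrow> nat \<Rightarrow> complex" where
  "Rw z q i j k l =
    (if i = j then (if k = i \<and> l = i then 1 else 0)
     else if j < i then
       (if k = i \<and> l = j then q * (z - 1) / (z - q)
        else if k = j \<and> l = i then z * (1 - q) / (z - q) else 0)
     else
       (if k = i \<and> l = j then (z - 1) / (z - q)
        else if k = j \<and> l = i then (1 - q) / (z - q) else 0))"

definition spec :: "(int \<Rightarrow> complex) \<Rightarrow> (int \<Rightarrow> complex) \<Rightarrow> int \<times> int \<Rightarrow> complex" where
  "spec u w v = u (snd v) / w (fst v)"

definition weight :: "real \<Rightarrow> (int \<Rightarrow> complex) \<Rightarrow> (int \<Rightarrow> complex) \<Rightarrow>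
     (int \<times> int) list \<Rightarrow> (int \<times> int) list \<Rightarrow> config \<Rightarrow> complex" where
  "weight q u w Q P \<sigma> =
     (\<Prod>v\<in>skew_domain Q P. Rw (spec u w v) (of_real q)
        (\<sigma> (Ve v)) (\<sigma> (He v)) (\<sigma> (Ve (fst v, snd v + 1))) (\<sigma> (He (fst v + 1, snd v))))"

text \<open>Height function h^{(x,y)}_{>c}, computed along the canonical path that follows Q
from Q_0 to its first point in column x and then goes straight up to (x,y).
Along Q each step crossing an edge of color > c raises the height by one; moving up
across a horizontal edge of color > c raises it by one.\<close>
definition height :: "(int \<times> int) list \<Rightarrow> nat list \<Rightarrow> config \<Rightarrow> nat \<Rightarrow> int \<times> int \<Rightarrow> nat" where
  "height Q col \<sigma> c d =
     (let k = (LEAST k. k < length Q \<and> fst (Q ! k) = fst d) in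
      card {j. j < k \<and> c < col ! j} +
      card {y. snd (Q ! k) \<le> y \<and> y < snd d \<and> c < \<sigma> (He (fst d + 1, y + 1))})"

text \<open>Vertices of the domain P_{\<swarrow>v} - Q: those of P - Q outside the closed
north-east quadrant of v.\<close>
definition sw_domain :: "(int \<times> int) list \<Rightarrow> (int \<times> int) list \<Rightarrow> int \<times> int \<Rightarrow> (int \<times> int) set" where
  "sw_domain Q P v = skew_domain Q P - {v'. fst v \<le> fst v' \<and> snd v \<le> snd v'}"

text \<open>\<Sigma>_{\<swarrow>v} = \<Sigma>0_{\<swarrow>v}: agreement on all edges of the subdomain (and its boundary).\<close>
definition agree_sw :: "(int \<times> int) list \<Rightarrow> (int \<times> int) list \<Rightarrow> int \<times> int \<Rightarrow> config \<Rightarrow> config \<Rightarrow> bool" where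
  "agree_sw Q P v \<sigma> \<sigma>0 \<longleftrightarrow> (\<forall>e \<in> adj_edges (sw_domain Q P v) \<union> boundary_edges Q. \<sigma> e = \<sigma>0 e)"

definition cond_exp :: "(config \<Rightarrow> complex) \<Rightarrow> config set \<Rightarrow> (config \<Rightarrow> complex) \<Rightarrow> complex" where
  "cond_exp W S X = (\<Sum>\<sigma>\<in>S. W \<sigma> * X \<sigma>) / (\<Sum>\<sigma>\<in>S. W \<sigma>)"

end

theory Submission
  imports Defs
begin

lemma ulp_step:
  assumes "up_left_path R" "Suc k < length R"
  shows "R ! Suc k = (fst (R ! k) - 1, snd (R ! k)) \<or> R ! Suc k = (fst (R ! k), snd (R ! k) + 1)"
  using assms unfolding up_left_path_def by blast

lemma ulp_mono:
  assumes "up_left_path R" "i \<le> j" "j < length R"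
  shows "fst (R ! j) \<le> fst (R ! i) \<and> snd (R ! i) \<le> snd (R ! j)"
  using assms(2,3)
proof (induction j)
  case 0 then show ?case by simp
next
  case (Suc j)
  show ?case
  proof (cases "i = Suc j")
    case True then show ?thesis by simp
  next
    case False
    then have "i \<le> j" using Suc.prems by simp
    with Suc.IH Suc.prems have ih: "fst (R ! j) \<le> fst (R ! i) \<and> snd (R ! i) \<le> snd (R ! j)" by simp
    from ulp_step[OF assms(1) Suc.prems(2)] ih show ?thesis by auto
  qed
qed

lemma ulp_fst_less:
  assumes "up_left_path R" "i < length R" "j < length R" "fst (R ! j) < fst (R ! i)"
  shows "i < j"
  using ulp_mono[OF assms(1), of j i] assms by force

lemma ulp_snd_less:
  assumes "up_left_path R" "i < length R" "j < length R" "snd (R ! i) < snd (R ! j)"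
  shows "i < j"
  using ulp_mono[OF assms(1), of j i] assms by force

lemma ulp_cross_left:
  assumes "up_left_path R" "j < length R" "x \<le> fst (R ! 0)" "fst (R ! j) < x"
  shows "\<exists>m. Suc m \<le> j \<and> fst (R ! m) = x \<and> R ! Suc m = (x - 1, snd (R ! m))"
  using assms(2,4)
proof (induction j)
  case 0 then show ?case using assms(3) by simp
next
  case (Suc j)
  show ?case
  proof (cases "fst (R ! j) < x")
    case True
    with Suc obtain m where "Suc m \<le> j \<and> fst (R ! m) = x \<and> R ! Suc m = (x - 1, snd (R ! m))" by auto
    then show ?thesis using le_SucI by blast
  next
    case False
    from ulp_step[OF assms(1) Suc.prems(1)] False Suc.prems(2)
    have "R ! Suc j = (fst (R ! j) - 1, snd (R ! j))" and "fst (R ! j) = x" by auto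
    then show ?thesis by auto
  qed
qed

lemma ulp_cross_up:
  assumes "up_left_path R" "j < length R" "snd (R ! 0) < y" "y \<le> snd (R ! j)"
  shows "\<exists>m. Suc m \<le> j \<and> snd (R ! m) = y - 1 \<and> R ! Suc m = (fst (R ! m), y)"
  using assms(2,4)
proof (induction j)
  case 0 then show ?case using assms(3) by simp
next
  case (Suc j)
  show ?case
  proof (cases "y \<le> snd (R ! j)")
    case True
    with Suc obtain m where "Suc m \<le> j \<and> snd (R ! m) = y - 1 \<and> R ! Suc m = (fst (R ! m), y)" by auto
    then show ?thesis using le_SucI by blast
  next
    case False
    from ulp_step[OF assms(1) Suc.prems(1)] False Suc.prems(2)
    have "R ! Suc j = (fst (R ! j), snd (R ! j) + 1)" and "snd (R ! j) = y - 1" by auto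
    then show ?thesis by auto
  qed
qed

lemma ulp_bounds:
  assumes "up_left_path R" "p \<in> set R"
  shows "fst p \<le> fst (hd R) \<and> snd p \<le> snd (last R)"
proof -
  obtain i where i: "i < length R" "p = R ! i" using assms(2) by (metis in_set_conv_nth)
  have ne: "R \<noteq> []" using assms(1) unfolding up_left_path_def by simp
  have "hd R = R ! 0" using ne by (simp add: hd_conv_nth)
  moreover have "last R = R ! (length R - 1)" using ne by (simp add: last_conv_nth)
  ultimately show ?thesis using ulp_mono[OF assms(1), of 0 i] ulp_mono[OF assms(1), of i "length R - 1"] i
    by auto
qed


definition top_e :: "int \<times> int \<Rightarrow> edge" where "top_e x = Ve (fst x, snd x + 1)"
definition right_e :: "int \<times> int \<Rightarrow> edge" where "right_e x = He (fst x + 1, snd x)"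
definition outs :: "(int \<times> int) set \<Rightarrow> edge set" where "outs N = top_e ` N \<union> right_e ` N"
definition SS :: "config \<Rightarrow> nat \<Rightarrow> edge set \<Rightarrow> config set" where
  "SS s0 n F = {\<sigma>. (\<forall>e. e \<notin> F \<longrightarrow> \<sigma> e = s0 e) \<and> (\<forall>e\<in>F. \<sigma> e \<le> n)}"
definition Rv :: "real \<Rightarrow> (int \<Rightarrow> complex) \<Rightarrow> (int \<Rightarrow> complex) \<Rightarrow> config \<Rightarrow> int \<times> int \<Rightarrow> complex" where
  "Rv q u w \<sigma> v = Rw (spec u w v) (of_real q)
        (\<sigma> (Ve v)) (\<sigma> (He v)) (\<sigma> (Ve (fst v, snd v + 1))) (\<sigma> (He (fst v + 1, snd v)))"

lemma SS_empty: "SS s0 n {} = {s0}"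
  unfolding SS_def by auto

lemma SS_insert_sum:
  assumes "e \<notin> F"
  shows "(\<Sum>\<sigma>\<in>SS s0 n (insert e F). f \<sigma>) = (\<Sum>\<tau>\<in>SS s0 n F. \<Sum>k\<le>n. f (\<tau>(e := k)))"
proof -
  have img: "SS s0 n (insert e F) = (\<lambda>(\<tau>, k). \<tau>(e := k)) ` (SS s0 n F \<times> {..n})"
  proof (rule set_eqI, rule iffI)
    fix \<sigma> assume h: "\<sigma> \<in> SS s0 n (insert e F)"
    have "\<sigma>(e := s0 e) \<in> SS s0 n F" using h assms unfolding SS_def by auto
    moreover have "\<sigma> e \<le> n" using h unfolding SS_def by auto
    moreover have "\<sigma> = (\<sigma>(e := s0 e))(e := \<sigma> e)" by simp
    ultimately show "\<sigma> \<in> (\<lambda>(\<tau>, k). \<tau>(e := k)) ` (SS s0 n F \<times> {..n})"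
      by (intro image_eqI[where x="(\<sigma>(e := s0 e), \<sigma> e)"]) auto
  next
    fix \<sigma> assume "\<sigma> \<in> (\<lambda>(\<tau>, k). \<tau>(e := k)) ` (SS s0 n F \<times> {..n})"
    then show "\<sigma> \<in> SS s0 n (insert e F)" unfolding SS_def by auto
  qed
  have inj: "inj_on (\<lambda>(\<tau>, k). \<tau>(e := k)) (SS s0 n F \<times> {..n})"
  proof (rule inj_onI)
    fix z1 z2
    assume h1: "z1 \<in> SS s0 n F \<times> {..n}" and h2: "z2 \<in> SS s0 n F \<times> {..n}"
      and h5: "(\<lambda>(\<tau>, k). \<tau>(e := k)) z1 = (\<lambda>(\<tau>, k). \<tau>(e := k)) z2"
    obtain \<tau> k where z1: "z1 = (\<tau>, k)" by fastforce
    obtain \<tau>' k' where z2: "z2 = (\<tau>', k')" by fastforce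
    have h: "\<tau> \<in> SS s0 n F" "\<tau>' \<in> SS s0 n F" "\<tau>(e := k) = \<tau>'(e := k')"
      using h1 h2 h5 z1 z2 by auto
    have "k = k'" using fun_cong[OF h(3), of e] by simp
    moreover have "\<tau> = \<tau>'"
    proof
      fix x show "\<tau> x = \<tau>' x"
      proof (cases "x = e")
        case True then show ?thesis using h(1,2) assms unfolding SS_def by auto
      next
        case False then show ?thesis using fun_cong[OF h(3), of x] by simp
      qed
    qed
    ultimately show "z1 = z2" using z1 z2 by simp
  qed
  have "(\<Sum>\<sigma>\<in>SS s0 n (insert e F). f \<sigma>) = (\<Sum>z\<in>SS s0 n F \<times> {..n}. f ((\<lambda>(\<tau>, k). \<tau>(e := k)) z))"
    unfolding img by (rule sum.reindex[OF inj, unfolded comp_def])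
  also have "\<dots> = (\<Sum>\<tau>\<in>SS s0 n F. \<Sum>k\<le>n. f (\<tau>(e := k)))"
    by (simp add: sum.cartesian_product case_prod_unfold)
  finally show ?thesis .
qed

lemma Rw_stoch_gen:
  assumes "i \<le> n" "j \<le> n"
  shows "(\<Sum>k\<le>n. \<Sum>l\<le>n. Rw z q i j k l * g k l) =
    (if i = j then g i i
     else if j < i then q * (z - 1) / (z - q) * g i j + z * (1 - q) / (z - q) * g j i
     else (z - 1) / (z - q) * g i j + (1 - q) / (z - q) * g j i)"
proof -
  have "(\<Sum>k\<le>n. \<Sum>l\<le>n. Rw z q i j k l * g k l) =
     (\<Sum>k\<le>n. \<Sum>l\<le>n. (if l = j then (if k = i then Rw z q i j i j * g i j else 0) else 0)
        + (if l = i then (if k = j then (if i = j then 0 else Rw z q i j j i * g j i) else 0) else 0))"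
    by (intro sum.cong refl) (auto simp: Rw_def)
  also have "\<dots> = Rw z q i j i j * g i j + (if i = j then 0 else Rw z q i j j i * g j i)"
    using assms by (simp add: sum.distrib)
  finally show ?thesis by (simp add: Rw_def)
qed


lemma edge_facts:
  "top_e x = top_e y \<longleftrightarrow> x = y" "right_e x = right_e y \<longleftrightarrow> x = y"
  "top_e x \<noteq> right_e y" "right_e x \<noteq> top_e y"
  "Ve x = top_e y \<longleftrightarrow> x = (fst y, snd y + 1)" "He x = right_e y \<longleftrightarrow> x = (fst y + 1, snd y)"
  "Ve x \<noteq> right_e y" "He x \<noteq> top_e y"
  by (auto simp: top_e_def right_e_def prod_eq_iff)

lemma Rw_stoch:
  assumes "i \<le> n" "j \<le> n" "z \<noteq> q"
  shows "(\<Sum>k\<le>n. \<Sum>l\<le>n. Rw z q i j k l) = 1"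
proof -
  have "(\<Sum>k\<le>n. \<Sum>l\<le>n. Rw z q i j k l) = (\<Sum>k\<le>n. \<Sum>l\<le>n. Rw z q i j k l * (\<lambda>_ _. 1) k l)" by simp
  also have "\<dots> = 1"
  proof -
    have nz: "z - q \<noteq> 0" using assms(3) by simp
    have e1: "q * (z - 1) / (z - q) + z * (1 - q) / (z - q) = 1"
      using nz by (simp add: add_divide_distrib[symmetric] algebra_simps)
    have e2: "(z - 1) / (z - q) + (1 - q) / (z - q) = 1"
      using nz by (simp add: add_divide_distrib[symmetric] algebra_simps)
    show ?thesis unfolding Rw_stoch_gen[OF assms(1,2)] using e1 e2 by simp
  qed
  finally show ?thesis .
qed

lemma SS_le: "\<forall>e. s0 e \<le> n \<Longrightarrow> \<sigma> \<in> SS s0 n F \<Longrightarrow> \<sigma> e \<le> n"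
  unfolding SS_def by (cases "e \<in> F") auto

lemma core:
  fixes N :: "(int \<times> int) set"
  assumes "finite N" "v \<in> N" "\<forall>x\<in>N. x \<noteq> v \<longrightarrow> fst v + snd v < fst x + snd x"
    "\<forall>x\<in>N. spec u w x \<noteq> of_real q" "\<forall>e. s0 e \<le> n"
  shows "(\<Sum>\<sigma>\<in>SS s0 n (outs N). (\<Prod>x\<in>N. Rv q u w \<sigma> x) * g (\<sigma> (top_e v)) (\<sigma> (right_e v))) =
     (\<Sum>k\<le>n. \<Sum>l\<le>n. Rw (spec u w v) (of_real q) (s0 (Ve v)) (s0 (He v)) k l * g k l)"
  using assms(1-4)
proof (induction N rule: finite_psubset_induct)
  case (psubset N)
  define M where "M = Max ((\<lambda>x. fst x + snd x) ` N)"
  have "M \<in> (\<lambda>x. fst x + snd x) ` N" unfolding M_def using psubset by (intro Max_in) auto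
  then obtain m where m: "m \<in> N" "fst m + snd m = M" by auto
  have mmax: "\<forall>x\<in>N. fst x + snd x \<le> fst m + snd m" using m psubset(1) unfolding M_def by auto
  define N' where "N' = N - {m}"
  have outsN: "outs N = insert (top_e m) (insert (right_e m) (outs N'))"
    unfolding outs_def N'_def using m by auto
  have t_notin: "top_e m \<notin> insert (right_e m) (outs N')" and r_notin: "right_e m \<notin> outs N'"
    unfolding outs_def N'_def by (auto simp: edge_facts)
  have split: "(\<Sum>\<sigma>\<in>SS s0 n (outs N). f \<sigma>) =
      (\<Sum>\<tau>\<in>SS s0 n (outs N'). \<Sum>l\<le>n. \<Sum>k\<le>n. f (\<tau>(right_e m := l, top_e m := k)))" for f
    unfolding outsN SS_insert_sum[OF t_notin] SS_insert_sum[OF r_notin] ..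
  have edges_other: "Ve x \<noteq> top_e m \<and> Ve x \<noteq> right_e m \<and> He x \<noteq> top_e m \<and> He x \<noteq> right_e m \<and>
      Ve (fst x, snd x + 1) \<noteq> top_e m \<and> Ve (fst x, snd x + 1) \<noteq> right_e m \<and>
      He (fst x + 1, snd x) \<noteq> top_e m \<and> He (fst x + 1, snd x) \<noteq> right_e m" if "x \<in> N'" for x
    using that mmax unfolding N'_def by (auto simp: top_e_def right_e_def prod_eq_iff)
  have Rv_other: "Rv q u w (\<tau>(right_e m := l, top_e m := k)) x = Rv q u w \<tau> x" if "x \<in> N'" for x \<tau> k l
    using edges_other[OF that] unfolding Rv_def by simp
  have Rv_m: "Rv q u w (\<tau>(right_e m := l, top_e m := k)) m =
      Rw (spec u w m) (of_real q) (\<tau> (Ve m)) (\<tau> (He m)) k l" for \<tau> k l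
    unfolding Rv_def by (simp add: top_e_def right_e_def prod_eq_iff)
  have prodN: "(\<Prod>x\<in>N. Rv q u w \<sigma> x) = Rv q u w \<sigma> m * (\<Prod>x\<in>N'. Rv q u w \<sigma> x)" for \<sigma>
    unfolding N'_def using m psubset(1) by (simp add: prod.remove)
  show ?case
  proof (cases "N = {v}")
    case True
    then have mv: "m = v" and N'e: "N' = {}" using m unfolding N'_def by auto
    have "(\<Sum>\<sigma>\<in>SS s0 n (outs N). (\<Prod>x\<in>N. Rv q u w \<sigma> x) * g (\<sigma> (top_e v)) (\<sigma> (right_e v)))
       = (\<Sum>l\<le>n. \<Sum>k\<le>n. Rw (spec u w v) (of_real q) (s0 (Ve v)) (s0 (He v)) k l * g k l)"
      apply (subst split)
      using mv True unfolding N'e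
      by (simp add: prodN N'e Rv_m[unfolded mv] edge_facts outs_def SS_empty)
    also have "\<dots> = (\<Sum>k\<le>n. \<Sum>l\<le>n. Rw (spec u w v) (of_real q) (s0 (Ve v)) (s0 (He v)) k l * g k l)"
      by (rule sum.swap)
    finally show ?thesis .
  next
    case False
    have mv: "m \<noteq> v" using False psubset m mmax by force
    have vN': "v \<in> N'" using mv psubset unfolding N'_def by auto
    have sub: "N' \<subset> N" unfolding N'_def using m by auto
    have IH: "(\<Sum>\<sigma>\<in>SS s0 n (outs N'). (\<Prod>x\<in>N'. Rv q u w \<sigma> x) * g (\<sigma> (top_e v)) (\<sigma> (right_e v))) =
       (\<Sum>k\<le>n. \<Sum>l\<le>n. Rw (spec u w v) (of_real q) (s0 (Ve v)) (s0 (He v)) k l * g k l)"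
      using psubset.IH[OF sub vN'] psubset.prems sub by auto
    have vm: "top_e v \<noteq> top_e m \<and> top_e v \<noteq> right_e m \<and> right_e v \<noteq> top_e m \<and> right_e v \<noteq> right_e m"
      using mv by (simp add: edge_facts)
    have zq: "spec u w m \<noteq> of_real q" using psubset.prems m by auto
    have inner: "(\<Sum>l\<le>n. \<Sum>k\<le>n. (\<Prod>x\<in>N. Rv q u w (\<tau>(right_e m := l, top_e m := k)) x) *
            g ((\<tau>(right_e m := l, top_e m := k)) (top_e v)) ((\<tau>(right_e m := l, top_e m := k)) (right_e v)))
        = (\<Prod>x\<in>N'. Rv q u w \<tau> x) * g (\<tau> (top_e v)) (\<tau> (right_e v))" if "\<tau> \<in> SS s0 n (outs N')" for \<tau>
    proof -
      have "(\<Sum>l\<le>n. \<Sum>k\<le>n. (\<Prod>x\<in>N. Rv q u w (\<tau>(right_e m := l, top_e m := k)) x) *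
            g ((\<tau>(right_e m := l, top_e m := k)) (top_e v)) ((\<tau>(right_e m := l, top_e m := k)) (right_e v)))
          = (\<Sum>l\<le>n. \<Sum>k\<le>n. Rw (spec u w m) (of_real q) (\<tau> (Ve m)) (\<tau> (He m)) k l *
               ((\<Prod>x\<in>N'. Rv q u w \<tau> x) * g (\<tau> (top_e v)) (\<tau> (right_e v))))"
        using vm by (simp add: prodN Rv_m Rv_other mult_ac cong: prod.cong)
      also have "\<dots> = (\<Sum>k\<le>n. \<Sum>l\<le>n. Rw (spec u w m) (of_real q) (\<tau> (Ve m)) (\<tau> (He m)) k l) *
               ((\<Prod>x\<in>N'. Rv q u w \<tau> x) * g (\<tau> (top_e v)) (\<tau> (right_e v)))"
        by (subst sum.swap) (simp add: sum_distrib_right)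
      also have "\<dots> = (\<Prod>x\<in>N'. Rv q u w \<tau> x) * g (\<tau> (top_e v)) (\<tau> (right_e v))"
        using Rw_stoch[OF SS_le[OF assms(5) that] SS_le[OF assms(5) that] zq] by simp
      finally show ?thesis .
    qed
    show ?thesis unfolding split using inner IH by simp
  qed
qed


definition ind :: "nat \<Rightarrow> nat \<Rightarrow> nat" where "ind c x = (if c < x then 1 else 0)"

definition hh :: "(int \<times> int) list \<Rightarrow> nat list \<Rightarrow> config \<Rightarrow> nat \<Rightarrow> nat \<Rightarrow> int \<Rightarrow> int \<Rightarrow> nat" where
  "hh Q col \<sigma> c m x y = card {j. j < m \<and> c < col ! j} +
     card {y'. snd (Q ! m) \<le> y' \<and> y' < y \<and> c < \<sigma> (He (x + 1, y' + 1))}"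

lemma height_hh: "height Q col \<sigma> c d =
   hh Q col \<sigma> c (LEAST k. k < length Q \<and> fst (Q ! k) = fst d) (fst d) (snd d)"
  by (simp add: height_def hh_def Let_def)

lemma card_int_pred_ext:
  assumes "s \<le> y"
  shows "card {y'::int. s \<le> y' \<and> y' < y + 1 \<and> P y'} = card {y'. s \<le> y' \<and> y' < y \<and> P y'} + (if P y then 1 else 0)"
proof -
  have fin: "finite {y'::int. s \<le> y' \<and> y' < y \<and> P y'}"
    by (rule finite_subset[of _ "{s..<y}"]) auto
  show ?thesis
  proof (cases "P y")
    case True
    then have "{y'::int. s \<le> y' \<and> y' < y + 1 \<and> P y'} = insert y {y'. s \<le> y' \<and> y' < y \<and> P y'}"
      using assms by auto
    then show ?thesis using fin True by simp
  next
    case False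
    then have "{y'::int. s \<le> y' \<and> y' < y + 1 \<and> P y'} = {y'. s \<le> y' \<and> y' < y \<and> P y'}"
      apply (intro Collect_cong)
      subgoal for y' by (cases "y' = y") auto
      done
    then show ?thesis using False by simp
  qed
qed

lemma card_int_pred_low:
  shows "card {y'::int. s \<le> y' \<and> y' < y \<and> P y'} = card {y'. s + 1 \<le> y' \<and> y' < y \<and> P y'} + (if P s \<and> s < y then 1 else 0)"
proof -
  have fin: "finite {y'::int. s + 1 \<le> y' \<and> y' < y \<and> P y'}"
    by (rule finite_subset[of _ "{s+1..<y}"]) auto
  show ?thesis
  proof (cases "P s \<and> s < y")
    case True
    then have "{y'::int. s \<le> y' \<and> y' < y \<and> P y'} = insert s {y'. s + 1 \<le> y' \<and> y' < y \<and> P y'}"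
      by auto
    then show ?thesis using fin True by simp
  next
    case False
    then have "{y'::int. s \<le> y' \<and> y' < y \<and> P y'} = {y'. s + 1 \<le> y' \<and> y' < y \<and> P y'}"
      apply (intro Collect_cong)
      subgoal for y' by (cases "y' = s") auto
      done
    then show ?thesis using False by simp
  qed
qed

lemma card_nat_pred_Suc:
  "card {j::nat. j < Suc m \<and> P j} = card {j. j < m \<and> P j} + (if P m then 1 else 0)"
proof -
  have fin: "finite {j::nat. j < m \<and> P j}" by simp
  show ?thesis
  proof (cases "P m")
    case True
    then have "{j::nat. j < Suc m \<and> P j} = insert m {j. j < m \<and> P j}" by auto
    then show ?thesis using True by simp
  next
    case False
    then have "{j::nat. j < Suc m \<and> P j} = {j. j < m \<and> P j}" using less_Suc_eq by auto
    then show ?thesis using False by simp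
  qed
qed

lemma hh_ext:
  assumes "snd (Q ! m) \<le> y"
  shows "hh Q col \<sigma> c m x (y + 1) = hh Q col \<sigma> c m x y + ind c (\<sigma> (He (x + 1, y + 1)))"
  unfolding hh_def ind_def using card_int_pred_ext[OF assms, of "\<lambda>y'. c < \<sigma> (He (x + 1, y' + 1))"]
  by simp

lemma hh_agree:
  assumes "\<forall>y'. y' < y \<longrightarrow> \<sigma> (He (x + 1, y' + 1)) = \<sigma>' (He (x + 1, y' + 1))"
  shows "hh Q col \<sigma> c m x y = hh Q col \<sigma>' c m x y"
proof -
  have "{y'. snd (Q ! m) \<le> y' \<and> y' < y \<and> c < \<sigma> (He (x + 1, y' + 1))} =
        {y'. snd (Q ! m) \<le> y' \<and> y' < y \<and> c < \<sigma>' (He (x + 1, y' + 1))}" using assms by auto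
  then show ?thesis unfolding hh_def by simp
qed

lemma hh_up:
  assumes "Q ! Suc m = (x, snd (Q ! m) + 1)" "\<sigma> (He (x + 1, snd (Q ! m) + 1)) = col ! m"
    "snd (Q ! m) + 1 \<le> y"
  shows "hh Q col \<sigma> c (Suc m) x y = hh Q col \<sigma> c m x y"
  unfolding hh_def card_nat_pred_Suc
  using card_int_pred_low[of "snd (Q ! m)" y "\<lambda>y'. c < \<sigma> (He (x + 1, y' + 1))"] assms by simp

lemma hh_up_iter:
  assumes "k \<le> m"
    "\<forall>i. k \<le> i \<and> i < m \<longrightarrow> Q ! Suc i = (x, snd (Q ! i) + 1) \<and> \<sigma> (He (x + 1, snd (Q ! i) + 1)) = col ! i"
    "snd (Q ! m) \<le> y"
  shows "hh Q col \<sigma> c k x y = hh Q col \<sigma> c m x y"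
  using assms
proof (induction m rule: dec_induct)
  case base then show ?case by simp
next
  case (step m)
  have st: "Q ! Suc m = (x, snd (Q ! m) + 1)" "\<sigma> (He (x + 1, snd (Q ! m) + 1)) = col ! m"
    using step by auto
  have "snd (Q ! m) + 1 \<le> y" using st(1) step.prems(2) by simp
  then have "hh Q col \<sigma> c (Suc m) x y = hh Q col \<sigma> c m x y" using hh_up[where Q=Q and m=m and x=x and \<sigma>=\<sigma> and col=col and c=c and y=y] st by simp
  moreover have "hh Q col \<sigma> c k x y = hh Q col \<sigma> c m x y"
    using step.IH step.prems \<open>snd (Q ! m) + 1 \<le> y\<close> by auto
  ultimately show ?case by simp
qed

lemma hh_left:
  assumes "Q ! m = (x, s)" "Q ! Suc m = (x - 1, s)" "\<sigma> (Ve (x, s + 1)) = col ! m"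
    "\<forall>y'. s + 1 \<le> y' \<and> y' \<le> y \<longrightarrow>
       ind c (\<sigma> (Ve (x, y'))) + ind c (\<sigma> (He (x, y'))) = ind c (\<sigma> (Ve (x, y' + 1))) + ind c (\<sigma> (He (x + 1, y')))"
    "s \<le> y"
  shows "hh Q col \<sigma> c (Suc m) (x - 1) y = hh Q col \<sigma> c m x y + ind c (\<sigma> (Ve (x, y + 1)))"
  using assms(5,4)
proof (induction y rule: int_ge_induct)
  case base
  have e: "\<And>P. {y'::int. s \<le> y' \<and> y' < s \<and> P y'} = {}" by auto
  show ?case unfolding hh_def card_nat_pred_Suc ind_def using assms(1-3) by (simp add: e)
next
  case (step y)
  have IH: "hh Q col \<sigma> c (Suc m) (x - 1) y = hh Q col \<sigma> c m x y + ind c (\<sigma> (Ve (x, y + 1)))"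
    using step by auto
  have c1: "hh Q col \<sigma> c (Suc m) (x - 1) (y + 1) = hh Q col \<sigma> c (Suc m) (x - 1) y + ind c (\<sigma> (He (x, y + 1)))"
    using hh_ext[of Q "Suc m" y col \<sigma> c "x - 1"] assms(2) step.hyps by simp
  have c2: "hh Q col \<sigma> c m x (y + 1) = hh Q col \<sigma> c m x y + ind c (\<sigma> (He (x + 1, y + 1)))"
    using hh_ext[of Q m y col \<sigma> c x] assms(1) step.hyps by simp
  have cons: "ind c (\<sigma> (Ve (x, y + 1))) + ind c (\<sigma> (He (x, y + 1))) =
      ind c (\<sigma> (Ve (x, y + 1 + 1))) + ind c (\<sigma> (He (x + 1, y + 1)))"
    using step.prems step.hyps by auto
  show ?case using IH c1 c2 cons by simp
qed


lemma sum_if_prefix: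
  fixes f :: "nat \<Rightarrow> 'a::comm_monoid_add"
  assumes "A \<le> r"
  shows "(\<Sum>t<r. if t < A then f t else 0) = (\<Sum>t<A. f t)"
proof -
  have "(\<Sum>t<r. if t < A then f t else 0) = (\<Sum>t\<in>{t \<in> {..<r}. t < A}. f t)"
    by (simp add: sum.inter_filter[symmetric])
  also have "{t \<in> {..<r}. t < A} = {..<A}" using assms by auto
  finally show ?thesis .
qed

lemma S1_eq:
  fixes x :: complex
  assumes "A \<le> r"
  shows "(\<Sum>t<r. x ^ (t + (if t < A then 1 else 0))) = (\<Sum>t<r. x ^ t) + (x ^ A - 1)"
proof -
  have "(\<Sum>t<r. x ^ (t + (if t < A then 1 else 0))) = (\<Sum>t<r. x ^ t + (if t < A then (x - 1) * x ^ t else 0))"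
    by (intro sum.cong) (auto simp: algebra_simps)
  also have "\<dots> = (\<Sum>t<r. x ^ t) + (\<Sum>t<A. (x - 1) * x ^ t)"
    by (simp add: sum.distrib sum_if_prefix[OF assms])
  also have "(\<Sum>t<A. (x - 1) * x ^ t) = x ^ A - 1"
    by (simp add: power_diff_1_eq sum_distrib_left)
  finally show ?thesis .
qed

lemma S2_eq:
  fixes x :: complex
  assumes "B \<le> A" "A \<le> r"
  shows "(\<Sum>t<r. x ^ (t + (if t < A then 1 else 0) + (if t < B then 1 else 0))) =
     (\<Sum>t<r. x ^ t) + (x ^ A - 1) + x * (x ^ B - 1)"
proof -
  have "(\<Sum>t<r. x ^ (t + (if t < A then 1 else 0) + (if t < B then 1 else 0))) =
     (\<Sum>t<r. x ^ t + (if t < A then (x - 1) * x ^ t else 0) + (if t < B then x * ((x - 1) * x ^ t) else 0))"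
    using assms by (intro sum.cong) (auto simp: algebra_simps power2_eq_square)
  also have "\<dots> = (\<Sum>t<r. x ^ t) + (\<Sum>t<A. (x - 1) * x ^ t) + (\<Sum>t<B. x * ((x - 1) * x ^ t))"
    using assms by (simp add: sum.distrib sum_if_prefix)
  also have "(\<Sum>t<A. (x - 1) * x ^ t) = x ^ A - 1"
    by (simp add: power_diff_1_eq sum_distrib_left)
  also have "(\<Sum>t<B. x * ((x - 1) * x ^ t)) = x * (x ^ B - 1)"
    by (simp add: power_diff_1_eq sum_distrib_left)
  finally show ?thesis .
qed

lemma alg_core:
  fixes x z U pA pB pr :: complex
  assumes "x \<noteq> z" "x \<noteq> 1" "(1 - x) * U = 1 - pr"
  shows
   "pA = (x - pr * z) / (x - z) + (x * z - 1) / (x - z) * (U + (pA - 1)) + (1 - z) / (x - z) * (U + (pA - 1) + x * (pA - 1))"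
   "x * (z - 1) / (z - x) * pB + z * (1 - x) / (z - x) * pA =
      (x - pr * z) / (x - z) + (x * z - 1) / (x - z) * (U + (pA - 1)) + (1 - z) / (x - z) * (U + (pA - 1) + x * (pB - 1))"
   "(z - 1) / (z - x) * pB + (1 - x) / (z - x) * pA =
      (x - pr * z) / (x - z) + (x * z - 1) / (x - z) * (U + (pA - 1)) + (1 - z) / (x - z) * (U + (pB - 1) + x * (pA - 1))"
proof -
  define d where "d = inverse (x - z)"
  have hd: "d * (x - z) = 1" unfolding d_def using assms(1) by simp
  have r1: "a / (x - z) = a * d" for a unfolding d_def by (simp add: divide_inverse)
  have r2: "a / (z - x) = - (a * d)" for a unfolding d_def
    by (metis divide_inverse inverse_minus_eq minus_diff_eq mult_minus_right)
  show "pA = (x - pr * z) / (x - z) + (x * z - 1) / (x - z) * (U + (pA - 1)) + (1 - z) / (x - z) * (U + (pA - 1) + x * (pA - 1))"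
    unfolding r1 r2 using hd assms(3) by algebra
  show "x * (z - 1) / (z - x) * pB + z * (1 - x) / (z - x) * pA =
      (x - pr * z) / (x - z) + (x * z - 1) / (x - z) * (U + (pA - 1)) + (1 - z) / (x - z) * (U + (pA - 1) + x * (pB - 1))"
    unfolding r1 r2 using hd assms(3) by algebra
  show "(z - 1) / (z - x) * pB + (1 - x) / (z - x) * pA =
      (x - pr * z) / (x - z) + (x * z - 1) / (x - z) * (U + (pA - 1)) + (1 - z) / (x - z) * (U + (pB - 1) + x * (pA - 1))"
    unfolding r1 r2 using hd assms(3) by algebra
qed


locale sk =
  fixes Q P :: "(int \<times> int) list" and a b :: int
  assumes ple: "path_le Q P" and vin: "(a, b) \<in> skew_domain Q P"
begin

definition NN where "NN = {y \<in> skew_domain Q P. a \<le> fst y \<and> b \<le> snd y}"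
definition SW where "SW = sw_domain Q P (a, b)"

lemma uQ: "up_left_path Q" and uP: "up_left_path P" and hdQP: "hd Q = hd P" and lastQP: "last Q = last P"
  using ple unfolding path_le_def by auto

lemma Qne: "Q \<noteq> []" using uQ unfolding up_left_path_def by simp

lemma hdQ: "hd Q = Q ! 0" using Qne by (simp add: hd_conv_nth)
lemma lastQ: "last Q = Q ! (length Q - 1)" using Qne by (simp add: last_conv_nth)

lemma j0_ex: "\<exists>j0 < length Q. fst (Q ! j0) \<le> a - 1 \<and> snd (Q ! j0) \<le> b - 1"
proof -
  obtain p where "p \<in> set Q" "fst p \<le> a - 1" "snd p \<le> b - 1" using vin unfolding skew_domain_def by auto
  then show ?thesis by (metis in_set_conv_nth)
qed

lemma Pbound:
  assumes "y \<in> skew_domain Q P"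
  shows "\<exists>p\<in>set P. fst y \<le> fst p \<and> snd y \<le> snd p" "fst y \<le> fst (Q ! 0)" "snd y \<le> snd (Q ! (length Q - 1))"
proof -
  obtain p where p: "p \<in> set P" "fst y \<le> fst p" "snd y \<le> snd p"
    using assms unfolding skew_domain_def by auto
  then show "\<exists>p\<in>set P. fst y \<le> fst p \<and> snd y \<le> snd p" by auto
  show "fst y \<le> fst (Q ! 0)" using ulp_bounds[OF uP p(1)] p hdQP hdQ by auto
  show "snd y \<le> snd (Q ! (length Q - 1))" using ulp_bounds[OF uP p(1)] p lastQP lastQ by auto
qed

lemma noQ: "i < length Q \<Longrightarrow> \<not> (a \<le> fst (Q ! i) \<and> b \<le> snd (Q ! i))"
proof
  assume h: "i < length Q" "a \<le> fst (Q ! i) \<and> b \<le> snd (Q ! i)"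
  obtain j0 where j0: "j0 < length Q" "fst (Q ! j0) \<le> a - 1" "snd (Q ! j0) \<le> b - 1" using j0_ex by auto
  have "i < j0" using ulp_fst_less[OF uQ h(1) j0(1)] h j0 by simp
  then have "snd (Q ! i) \<le> snd (Q ! j0)" using ulp_mono[OF uQ, of i j0] j0 by simp
  then show False using h j0 by simp
qed

lemma NN_char: "y \<in> NN \<longleftrightarrow> a \<le> fst y \<and> b \<le> snd y \<and> (\<exists>p\<in>set P. fst y \<le> fst p \<and> snd y \<le> snd p)"
proof -
  obtain p where "p \<in> set Q" "fst p \<le> a - 1" "snd p \<le> b - 1" using vin unfolding skew_domain_def by auto
  then show ?thesis unfolding NN_def skew_domain_def by (cases y) force
qed

lemma fin_skew: "finite (skew_domain Q P)"
proof (rule finite_subset)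
  show "skew_domain Q P \<subseteq> (\<Union>p\<in>set P. \<Union>p'\<in>set Q. {fst p' + 1..fst p} \<times> {snd p' + 1..snd p})"
    unfolding skew_domain_def by force
  show "finite (\<Union>p\<in>set P. \<Union>p'\<in>set Q. {fst p' + 1..fst p} \<times> {snd p' + 1..snd p})" by auto
qed

lemma fin_NN: "finite NN" unfolding NN_def using fin_skew by auto

lemma vNN: "(a, b) \<in> NN" unfolding NN_def using vin by auto

lemma skew_split: "skew_domain Q P = SW \<union> NN" "SW \<inter> NN = {}"
  unfolding SW_def NN_def sw_domain_def by auto

lemma sw_notin: "adj_edges SW \<inter> outs NN = {}"
  unfolding adj_edges_def outs_def top_e_def right_e_def SW_def sw_domain_def NN_def by auto

lemma qedge_notin:
  assumes "Suc k < length Q"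
  shows "qedge Q k \<notin> outs NN"
proof
  assume h: "qedge Q k \<in> outs NN"
  then obtain y where y: "y \<in> NN" "qedge Q k = top_e y \<or> qedge Q k = right_e y"
    unfolding outs_def by auto
  have ya: "a \<le> fst y" "b \<le> snd y" using y(1) unfolding NN_def by auto
  from ulp_step[OF uQ assms]
  show False
  proof
    assume st: "Q ! Suc k = (fst (Q ! k) - 1, snd (Q ! k))"
    then have "qedge Q k = Ve (fst (Q ! k), snd (Q ! k) + 1)"
      unfolding qedge_def cross_edge_def by simp
    then have "Q ! k = y" using y(2) by (auto simp: top_e_def right_e_def prod_eq_iff)
    then show False using noQ[of k] assms ya by simp
  next
    assume st: "Q ! Suc k = (fst (Q ! k), snd (Q ! k) + 1)"
    then have "qedge Q k = He (fst (Q ! k) + 1, snd (Q ! k) + 1)"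
      unfolding qedge_def cross_edge_def by simp
    then have "Q ! Suc k = y" using y(2) st by (auto simp: top_e_def right_e_def prod_eq_iff)
    then show False using noQ[of "Suc k"] assms ya by simp
  qed
qed

lemma boundary_notin: "boundary_edges Q \<inter> outs NN = {}"
  unfolding boundary_edges_def using qedge_notin by auto

lemma in_Ve:
  assumes "y \<in> NN"
  shows "Ve y \<in> outs NN \<union> adj_edges SW \<union> boundary_edges Q"
proof -
  obtain y1 y2 where yy: "y = (y1, y2)" by fastforce
  obtain p where p: "p \<in> set P" "y1 \<le> fst p" "y2 \<le> snd p" "a \<le> y1" "b \<le> y2"
    using assms NN_char yy by auto
  show ?thesis
  proof (cases "b < y2")
    case True
    then have "(y1, y2 - 1) \<in> NN" unfolding NN_char using p by (auto intro!: bexI[of _ p])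
    moreover have "Ve y = top_e (y1, y2 - 1)" using yy by (simp add: top_e_def)
    ultimately show ?thesis unfolding outs_def by auto
  next
    case False
    then have yb: "y2 = b" using p by simp
    show ?thesis
    proof (cases "(y1, b - 1) \<in> skew_domain Q P")
      case True
      then have "(y1, b - 1) \<in> SW" unfolding SW_def sw_domain_def by auto
      then have "Ve y \<in> adj_edges SW" unfolding adj_edges_def
        by (rule UN_I[where a="(y1, b - 1)"]) (use yy yb in auto)
      then show ?thesis by simp
    next
      case nin: False
      obtain j0 where j0: "j0 < length Q" "fst (Q ! j0) \<le> a - 1" "snd (Q ! j0) \<le> b - 1" using j0_ex by auto
      have "y1 \<le> fst (Q ! 0)" using Pbound(2)[of y] assms unfolding NN_def yy by auto
      then obtain m where m: "Suc m \<le> j0" "fst (Q ! m) = y1" "Q ! Suc m = (y1 - 1, snd (Q ! m))"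
        using ulp_cross_left[OF uQ j0(1), of y1] j0 p by auto
      have "snd (Q ! Suc m) \<le> snd (Q ! j0)" using ulp_mono[OF uQ m(1) j0(1)] by simp
      then have s1: "snd (Q ! m) \<le> b - 1" using m j0 by simp
      have "\<not> snd (Q ! m) \<le> b - 2"
      proof
        assume le2: "snd (Q ! m) \<le> b - 2"
        have qm: "Q ! Suc m \<in> set Q" using m j0 by (intro nth_mem) simp
        have "\<exists>p\<in>set P. y1 \<le> fst p \<and> b - 1 \<le> snd p" using p yb by auto
        moreover have "\<exists>p\<in>set Q. fst p \<le> y1 - 1 \<and> snd p \<le> b - 1 - 1"
          using qm m(3) le2 by (intro bexI[of _ "Q ! Suc m"]) auto
        ultimately have "(y1, b - 1) \<in> skew_domain Q P"
          unfolding skew_domain_def mem_Collect_eq prod.case by blast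
        then show False using nin by simp
      qed
      then have "snd (Q ! m) = b - 1" using s1 by simp
      then have "qedge Q m = Ve y" unfolding qedge_def cross_edge_def using m yy yb by simp
      moreover have "Suc m < length Q" using m j0 by simp
      ultimately show ?thesis unfolding boundary_edges_def by auto
    qed
  qed
qed

lemma in_He:
  assumes "y \<in> NN"
  shows "He y \<in> outs NN \<union> adj_edges SW \<union> boundary_edges Q"
proof -
  obtain y1 y2 where yy: "y = (y1, y2)" by fastforce
  obtain p where p: "p \<in> set P" "y1 \<le> fst p" "y2 \<le> snd p" "a \<le> y1" "b \<le> y2"
    using assms NN_char yy by auto
  show ?thesis
  proof (cases "a < y1")
    case True
    then have "(y1 - 1, y2) \<in> NN" unfolding NN_char using p by (auto intro!: bexI[of _ p])
    moreover have "He y = right_e (y1 - 1, y2)" using yy by (simp add: right_e_def)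
    ultimately show ?thesis unfolding outs_def by auto
  next
    case False
    then have ya: "y1 = a" using p by simp
    show ?thesis
    proof (cases "(a - 1, y2) \<in> skew_domain Q P")
      case True
      then have "(a - 1, y2) \<in> SW" unfolding SW_def sw_domain_def by auto
      then have "He y \<in> adj_edges SW" unfolding adj_edges_def
        by (rule UN_I[where a="(a - 1, y2)"]) (use yy ya in auto)
      then show ?thesis by simp
    next
      case nin: False
      obtain j0 where j0: "j0 < length Q" "fst (Q ! j0) \<le> a - 1" "snd (Q ! j0) \<le> b - 1" using j0_ex by auto
      define jl where "jl = length Q - 1"
      have jl: "jl < length Q" unfolding jl_def using Qne by simp
      have "y2 \<le> snd (Q ! jl)" using Pbound(3)[of y] assms unfolding NN_def yy jl_def by auto
      moreover have "snd (Q ! 0) < y2" using ulp_mono[OF uQ, of 0 j0] j0 p by simp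
      ultimately obtain m where m: "Suc m \<le> jl" "snd (Q ! m) = y2 - 1" "Q ! Suc m = (fst (Q ! m), y2)"
        using ulp_cross_up[OF uQ jl, of y2] by auto
      have "j0 < Suc m" using ulp_snd_less[OF uQ j0(1), of "Suc m"] m jl j0 p by simp
      then have "fst (Q ! m) \<le> fst (Q ! j0)" using ulp_mono[OF uQ, of j0 m] m jl by simp
      then have s1: "fst (Q ! m) \<le> a - 1" using j0 by simp
      have "\<not> fst (Q ! m) \<le> a - 2"
      proof
        assume le2: "fst (Q ! m) \<le> a - 2"
        have qm: "Q ! m \<in> set Q" using m jl by (intro nth_mem) simp
        have "\<exists>p\<in>set P. a - 1 \<le> fst p \<and> y2 \<le> snd p" using p ya by (intro bexI[of _ p]) auto
        moreover have "\<exists>p\<in>set Q. fst p \<le> a - 1 - 1 \<and> snd p \<le> y2 - 1"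
          using qm m le2 by (intro bexI[of _ "Q ! m"]) auto
        ultimately have "(a - 1, y2) \<in> skew_domain Q P"
          unfolding skew_domain_def mem_Collect_eq prod.case by blast
        then show False using nin by simp
      qed
      then have "fst (Q ! m) = a - 1" using s1 by simp
      then have "qedge Q m = He y" unfolding qedge_def cross_edge_def using m yy ya by simp
      moreover have "Suc m < length Q" using m jl by simp
      ultimately show ?thesis unfolding boundary_edges_def by auto
    qed
  qed
qed


lemma dom_sub: "dom_edges Q P \<subseteq> outs NN \<union> adj_edges SW \<union> boundary_edges Q"
proof
  fix e assume "e \<in> dom_edges Q P"
  then consider "e \<in> adj_edges SW" | "e \<in> adj_edges NN" | "e \<in> boundary_edges Q"
    unfolding dom_edges_def skew_split(1) adj_edges_def by blast
  then show "e \<in> outs NN \<union> adj_edges SW \<union> boundary_edges Q"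
  proof cases
    case 2
    then obtain y where y: "y \<in> NN" "e \<in> {Ve y, He y, Ve (fst y, snd y + 1), He (fst y + 1, snd y)}"
      unfolding adj_edges_def by auto
    then show ?thesis using in_Ve[OF y(1)] in_He[OF y(1)]
      unfolding outs_def top_e_def right_e_def by auto
  qed auto
qed

lemma outs_sub: "outs NN \<subseteq> dom_edges Q P"
  unfolding outs_def dom_edges_def adj_edges_def top_e_def right_e_def skew_split(1) by force

lemma S_eq:
  assumes s0: "\<sigma>0 \<in> configs n Q P col"
  shows "{\<sigma> \<in> configs n Q P col. agree_sw Q P (a, b) \<sigma> \<sigma>0} = SS \<sigma>0 n (outs NN)"
proof (rule set_eqI, rule iffI)
  fix \<sigma> assume h: "\<sigma> \<in> {\<sigma> \<in> configs n Q P col. agree_sw Q P (a, b) \<sigma> \<sigma>0}"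
  have "\<sigma> e = \<sigma>0 e" if "e \<notin> outs NN" for e
  proof (cases "e \<in> dom_edges Q P")
    case True
    then have "e \<in> adj_edges SW \<union> boundary_edges Q" using dom_sub that by auto
    then show ?thesis using h unfolding agree_sw_def SW_def by auto
  next
    case False
    then show ?thesis using h s0 unfolding configs_def by auto
  qed
  moreover have "\<sigma> e \<le> n" for e using h unfolding configs_def by auto
  ultimately show "\<sigma> \<in> SS \<sigma>0 n (outs NN)" unfolding SS_def by auto
next
  fix \<sigma> assume h: "\<sigma> \<in> SS \<sigma>0 n (outs NN)"
  have s0n: "\<forall>e. \<sigma>0 e \<le> n" using s0 unfolding configs_def by auto
  have off: "\<sigma> e = \<sigma>0 e" if "e \<notin> outs NN" for e using h that unfolding SS_def by auto
  have "\<sigma> \<in> configs n Q P col"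
    unfolding configs_def
  proof (intro CollectI conjI allI impI)
    fix e assume "e \<notin> dom_edges Q P"
    then show "\<sigma> e = 0" using off[of e] outs_sub s0 unfolding configs_def by auto
  next
    fix e show "\<sigma> e \<le> n" using SS_le[OF s0n h] .
  next
    fix k assume "Suc k < length Q"
    then show "\<sigma> (qedge Q k) = col ! k" using off qedge_notin s0 unfolding configs_def by auto
  qed
  moreover have "agree_sw Q P (a, b) \<sigma> \<sigma>0"
    unfolding agree_sw_def using off sw_notin boundary_notin unfolding SW_def by auto
  ultimately show "\<sigma> \<in> {\<sigma> \<in> configs n Q P col. agree_sw Q P (a, b) \<sigma> \<sigma>0}" by simp
qed

lemma col_a: "\<exists>m. Suc m < length Q \<and> fst (Q ! m) = a \<and> Q ! Suc m = (a - 1, snd (Q ! m)) \<and>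
   snd (Q ! m) \<le> b - 1 \<and> (\<forall>i\<le>m. a \<le> fst (Q ! i))"
proof -
  obtain j0 where j0: "j0 < length Q" "fst (Q ! j0) \<le> a - 1" "snd (Q ! j0) \<le> b - 1" using j0_ex by auto
  have "a \<le> fst (Q ! 0)" using Pbound(2)[OF vin] by simp
  then obtain m where m: "Suc m \<le> j0" "fst (Q ! m) = a" "Q ! Suc m = (a - 1, snd (Q ! m))"
    using ulp_cross_left[OF uQ j0(1), of a] j0 by auto
  have "snd (Q ! Suc m) \<le> snd (Q ! j0)" using ulp_mono[OF uQ m(1) j0(1)] by simp
  then have "snd (Q ! m) \<le> b - 1" using m j0 by simp
  moreover have "\<forall>i\<le>m. a \<le> fst (Q ! i)" using ulp_mono[OF uQ, of _ m] m j0 by force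
  ultimately show ?thesis using m j0 by (intro exI[of _ m]) auto
qed


definition mA where "mA = (SOME m. Suc m < length Q \<and> fst (Q ! m) = a \<and> Q ! Suc m = (a - 1, snd (Q ! m)) \<and>
   snd (Q ! m) \<le> b - 1 \<and> (\<forall>i\<le>m. a \<le> fst (Q ! i)))"

lemma mA: "Suc mA < length Q" "fst (Q ! mA) = a" "Q ! Suc mA = (a - 1, snd (Q ! mA))"
   "snd (Q ! mA) \<le> b - 1" "\<forall>i\<le>mA. a \<le> fst (Q ! i)"
  using someI_ex[OF col_a] unfolding mA_def[symmetric] by auto

definition kA where "kA = (LEAST k. k < length Q \<and> fst (Q ! k) = a)"

lemma kA: "kA \<le> mA" "fst (Q ! kA) = a" "kA < length Q"
proof -
  have ex: "mA < length Q \<and> fst (Q ! mA) = a" using mA by simp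
  show "kA \<le> mA" unfolding kA_def by (rule Least_le) (use ex in simp)
  show "fst (Q ! kA) = a" "kA < length Q" using LeastI[of "\<lambda>k. k < length Q \<and> fst (Q ! k) = a", OF ex]
    unfolding kA_def by auto
qed

lemma kA1: "(LEAST k. k < length Q \<and> fst (Q ! k) = a - 1) = Suc mA"
proof (rule Least_equality)
  show "Suc mA < length Q \<and> fst (Q ! Suc mA) = a - 1" using mA by simp
next
  fix y assume h: "y < length Q \<and> fst (Q ! y) = a - 1"
  show "Suc mA \<le> y"
  proof (rule ccontr)
    assume "\<not> Suc mA \<le> y"
    then have "y \<le> mA" by simp
    then show False using mA(5) h by force
  qed
qed

lemma height_a: "height Q col \<sigma> c (a, y) = hh Q col \<sigma> c kA a y"
  unfolding height_hh kA_def by simp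

lemma height_a1: "height Q col \<sigma> c (a - 1, y) = hh Q col \<sigma> c (Suc mA) (a - 1) y"
  by (simp only: height_hh fst_conv snd_conv kA1)

lemma h_top:
  "height Q col \<sigma> c (a, b) = height Q col \<sigma> c (a, b - 1) + ind c (\<sigma> (He (a + 1, b)))"
proof -
  have "snd (Q ! kA) \<le> snd (Q ! mA)" using ulp_mono[OF uQ kA(1)] mA(1) by simp
  then have "snd (Q ! kA) \<le> b - 1" using mA(4) by simp
  from hh_ext[OF this, of col \<sigma> c a] show ?thesis unfolding height_a by simp
qed

lemma h_NW:
  "height Q col \<sigma> c (a - 1, b) = height Q col \<sigma> c (a - 1, b - 1) + ind c (\<sigma> (He (a, b)))"
proof -
  have "snd (Q ! Suc mA) \<le> b - 1" using mA by simp
  from hh_ext[OF this, of col \<sigma> c "a - 1"] show ?thesis unfolding height_a1 by simp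
qed

lemma h_SW:
  assumes cfg: "\<sigma> \<in> configs n Q P col"
    and cons: "\<forall>y\<in>skew_domain Q P. ind c (\<sigma> (Ve y)) + ind c (\<sigma> (He y)) =
        ind c (\<sigma> (Ve (fst y, snd y + 1))) + ind c (\<sigma> (He (fst y + 1, snd y)))"
  shows "height Q col \<sigma> c (a - 1, b - 1) = height Q col \<sigma> c (a, b - 1) + ind c (\<sigma> (Ve (a, b)))"
proof -
  have qe: "\<sigma> (qedge Q k) = col ! k" if "Suc k < length Q" for k using cfg that unfolding configs_def by auto
  define s where "s = snd (Q ! mA)"
  have up: "\<forall>i. kA \<le> i \<and> i < mA \<longrightarrow> Q ! Suc i = (a, snd (Q ! i) + 1) \<and> \<sigma> (He (a + 1, snd (Q ! i) + 1)) = col ! i"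
  proof (intro allI impI)
    fix i assume i: "kA \<le> i \<and> i < mA"
    have l: "Suc i < length Q" using i mA(1) by simp
    have m1: "fst (Q ! i) \<le> fst (Q ! kA)" using ulp_mono[OF uQ, of kA i] i l by simp
    have m2: "fst (Q ! Suc i) \<le> fst (Q ! kA)" using ulp_mono[OF uQ, of kA "Suc i"] i l by simp
    have m3: "a \<le> fst (Q ! i)" "a \<le> fst (Q ! Suc i)" using mA(5) i by auto
    have f1: "fst (Q ! i) = a" using m1 m3 kA(2) by simp
    have f2: "fst (Q ! Suc i) = a" using m2 m3 kA(2) by simp
    have st: "Q ! Suc i = (a, snd (Q ! i) + 1)" using ulp_step[OF uQ l] f1 f2 by auto
    have "qedge Q i = He (a + 1, snd (Q ! i) + 1)" unfolding qedge_def cross_edge_def using st f1 by simp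
    then show "Q ! Suc i = (a, snd (Q ! i) + 1) \<and> \<sigma> (He (a + 1, snd (Q ! i) + 1)) = col ! i"
      using st qe[OF l] by simp
  qed
  have e1: "hh Q col \<sigma> c kA a (b - 1) = hh Q col \<sigma> c mA a (b - 1)"
    by (rule hh_up_iter[OF kA(1) up mA(4)])
  have qm: "Q ! mA = (a, s)" using mA(2) unfolding s_def by (simp add: prod_eq_iff)
  have qm1: "Q ! Suc mA = (a - 1, s)" using mA(3) unfolding s_def by simp
  have col_m: "\<sigma> (Ve (a, s + 1)) = col ! mA"
    using qe[OF mA(1)] unfolding qedge_def cross_edge_def qm qm1 by simp
  have cons': "\<forall>y'. s + 1 \<le> y' \<and> y' \<le> b - 1 \<longrightarrow>
       ind c (\<sigma> (Ve (a, y'))) + ind c (\<sigma> (He (a, y'))) = ind c (\<sigma> (Ve (a, y' + 1))) + ind c (\<sigma> (He (a + 1, y')))"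
  proof (intro allI impI)
    fix y' assume y': "s + 1 \<le> y' \<and> y' \<le> b - 1"
    obtain p where p: "p \<in> set P" "a \<le> fst p" "b \<le> snd p" using vin unfolding skew_domain_def by auto
    have qin: "Q ! Suc mA \<in> set Q" using mA(1) by (intro nth_mem) simp
    have "\<exists>p\<in>set P. a \<le> fst p \<and> y' \<le> snd p" using p y' by (intro bexI[of _ p]) auto
    moreover have "\<exists>p\<in>set Q. fst p \<le> a - 1 \<and> snd p \<le> y' - 1"
      using qin qm1 y' by (intro bexI[of _ "Q ! Suc mA"]) auto
    ultimately have "(a, y') \<in> skew_domain Q P"
      unfolding skew_domain_def mem_Collect_eq prod.case by blast
    then show "ind c (\<sigma> (Ve (a, y'))) + ind c (\<sigma> (He (a, y'))) = ind c (\<sigma> (Ve (a, y' + 1))) + ind c (\<sigma> (He (a + 1, y')))"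
      using cons by auto
  qed
  have sb: "s \<le> b - 1" using mA(4) unfolding s_def by simp
  have e2: "hh Q col \<sigma> c (Suc mA) (a - 1) (b - 1) = hh Q col \<sigma> c mA a (b - 1) + ind c (\<sigma> (Ve (a, b - 1 + 1)))"
    by (rule hh_left[OF qm qm1 col_m cons' sb])
  show ?thesis unfolding height_a height_a1 using e1 e2 by simp
qed

lemma h_agree:
  assumes "\<forall>e. e \<notin> outs NN \<longrightarrow> \<sigma> e = \<sigma>' e"
  shows "height Q col \<sigma> c (a, b - 1) = height Q col \<sigma>' c (a, b - 1)"
    "height Q col \<sigma> c (a - 1, b - 1) = height Q col \<sigma>' c (a - 1, b - 1)"
    "height Q col \<sigma> c (a - 1, b) = height Q col \<sigma>' c (a - 1, b)"
proof -
  have n1: "He (a + 1, y' + 1) \<notin> outs NN" if "y' < b - 1" for y'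
    using that unfolding outs_def NN_def top_e_def right_e_def by auto
  have n2: "He (a, y' + 1) \<notin> outs NN" for y'
    unfolding outs_def NN_def top_e_def right_e_def by auto
  show "height Q col \<sigma> c (a, b - 1) = height Q col \<sigma>' c (a, b - 1)"
    unfolding height_a by (rule hh_agree) (use assms n1 in auto)
  show "height Q col \<sigma> c (a - 1, b - 1) = height Q col \<sigma>' c (a - 1, b - 1)"
    unfolding height_a1 by (rule hh_agree) (use assms n2 in auto)
  show "height Q col \<sigma> c (a - 1, b) = height Q col \<sigma>' c (a - 1, b)"
    unfolding height_a1 by (rule hh_agree) (use assms n2 in auto)
qed

end


lemma Rw_nz: "Rw z q i j k l \<noteq> 0 \<Longrightarrow> (k = i \<and> l = j) \<or> (k = j \<and> l = i)"
  unfolding Rw_def by (auto split: if_splits)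

lemma prefix_ex:
  assumes "sorted cs"
  shows "\<exists>A \<le> length cs. \<forall>t < length cs. (cs ! t < l \<longleftrightarrow> t < A)"
proof (intro exI conjI allI impI)
  define A where "A = length (takeWhile (\<lambda>c. c < l) cs)"
  show "A \<le> length cs" unfolding A_def by (rule length_takeWhile_le)
  fix t assume t: "t < length cs"
  show "cs ! t < l \<longleftrightarrow> t < A"
  proof
    assume h: "cs ! t < l"
    show "t < A"
    proof (rule ccontr)
      assume "\<not> t < A"
      then have tA: "A \<le> t" by simp
      then have "A < length cs" using t by simp
      then have "\<not> cs ! A < l" unfolding A_def by (rule nth_length_takeWhile)
      moreover have "cs ! A \<le> cs ! t" using assms tA t by (simp add: sorted_iff_nth_mono)
      ultimately show False using h by simp
    qed
  next
    assume "t < A"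
    then show "cs ! t < l" unfolding A_def by (metis takeWhile_nth nth_mem set_takeWhileD)
  qed
qed

lemma alg2:
  fixes x z U pA pB pr h :: complex
  assumes "x \<noteq> z" "(1 - x) * U = 1 - pr"
  shows
   "h * pA = (x - pr * z) / (x - z) * h + (x * z - 1) / (x - z) * (h * (U + (pA - 1))) + (1 - z) / (x - z) * (h * (U + (pA - 1) + x * (pA - 1)))"
   "x * (z - 1) / (z - x) * (h * pB) + z * (1 - x) / (z - x) * (h * pA) =
      (x - pr * z) / (x - z) * h + (x * z - 1) / (x - z) * (h * (U + (pA - 1))) + (1 - z) / (x - z) * (h * (U + (pA - 1) + x * (pB - 1)))"
   "(z - 1) / (z - x) * (h * pB) + (1 - x) / (z - x) * (h * pA) =
      (x - pr * z) / (x - z) * h + (x * z - 1) / (x - z) * (h * (U + (pA - 1))) + (1 - z) / (x - z) * (h * (U + (pB - 1) + x * (pA - 1)))"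
proof -
  define d where "d = inverse (x - z)"
  have hd: "d * (x - z) = 1" unfolding d_def using assms(1) by simp
  have r1: "a / (x - z) = a * d" for a unfolding d_def by (simp add: divide_inverse)
  have r2: "a / (z - x) = - (a * d)" for a unfolding d_def
    by (metis divide_inverse inverse_minus_eq minus_diff_eq mult_minus_right)
  show "h * pA = (x - pr * z) / (x - z) * h + (x * z - 1) / (x - z) * (h * (U + (pA - 1))) + (1 - z) / (x - z) * (h * (U + (pA - 1) + x * (pA - 1)))"
    unfolding r1 r2 using hd assms(2) by algebra
  show "x * (z - 1) / (z - x) * (h * pB) + z * (1 - x) / (z - x) * (h * pA) =
      (x - pr * z) / (x - z) * h + (x * z - 1) / (x - z) * (h * (U + (pA - 1))) + (1 - z) / (x - z) * (h * (U + (pA - 1) + x * (pB - 1)))"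
    unfolding r1 r2 using hd assms(2) by algebra
  show "(z - 1) / (z - x) * (h * pB) + (1 - x) / (z - x) * (h * pA) =
      (x - pr * z) / (x - z) * h + (x * z - 1) / (x - z) * (h * (U + (pA - 1))) + (1 - z) / (x - z) * (h * (U + (pB - 1) + x * (pA - 1)))"
    unfolding r1 r2 using hd assms(2) by algebra
qed


theorem proposition5p1:
  fixes n :: nat and Q P :: "(int \<times> int) list" and col :: "nat list"
    and u w :: "int \<Rightarrow> complex" and q :: real and a b :: int
    and cs :: "nat list" and \<sigma>0 :: config
  defines "z \<equiv> spec u w (a, b)"
    and "S \<equiv> {\<sigma> \<in> configs n Q P col. agree_sw Q P (a, b) \<sigma> \<sigma>0}"
    and "hSE \<equiv> \<lambda>c. height Q col \<sigma>0 c (a, b - 1)"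
    and "hSW \<equiv> \<lambda>c. height Q col \<sigma>0 c (a - 1, b - 1)"
    and "hNW \<equiv> \<lambda>c. height Q col \<sigma>0 c (a - 1, b)"
    and "r \<equiv> length cs"
  assumes "0 < q" and "q < 1"
    and "path_le Q P"
    and "length col = length Q - 1" and "sorted col" and "\<forall>c\<in>set col. c \<le> n"
    and "\<forall>v\<in>skew_domain Q P. spec u w v \<noteq> of_real q"
    and "(a, b) \<in> skew_domain Q P"
    and "sorted cs"
    and "\<sigma>0 \<in> configs n Q P col"
    and "(\<Sum>\<sigma>\<in>S. weight q u w Q P \<sigma>) \<noteq> 0"
  shows "cond_exp (weight q u w Q P) S
           (\<lambda>\<sigma>. of_real q ^ (\<Sum>t<r. height Q col \<sigma> (cs ! t) (a, b))) =
         (of_real q - of_real q ^ r * z) / (of_real q - z) * of_real q ^ (\<Sum>t<r. hSE (cs ! t))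
       + (of_real q * z - 1) / (of_real q - z) *
           (\<Sum>i<r. of_real q ^ (i + (\<Sum>t\<in>{..<r} - {i}. hSE (cs ! t)) + hSW (cs ! i)))
       + (1 - z) / (of_real q - z) *
           (\<Sum>i<r. of_real q ^ (i + (\<Sum>t\<in>{..<r} - {i}. hSE (cs ! t)) + hNW (cs ! i)))"
proof -
  define x where "x = complex_of_real q"
  interpret sk Q P a b using \<open>path_le Q P\<close> \<open>(a, b) \<in> skew_domain Q P\<close> by unfold_locales
  have cfg0: "\<sigma>0 \<in> configs n Q P col" by fact
  have s0n: "\<forall>e. \<sigma>0 e \<le> n" using cfg0 unfolding configs_def by auto
  have Seq: "S = SS \<sigma>0 n (outs NN)" unfolding S_def by (rule S_eq[OF cfg0])
  have off: "\<sigma> e = \<sigma>0 e" if "\<sigma> \<in> S" "e \<notin> outs NN" for \<sigma> e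
    using that unfolding Seq SS_def by auto
  have wRv: "weight q u w Q P \<sigma> = (\<Prod>y\<in>skew_domain Q P. Rv q u w \<sigma> y)" for \<sigma>
    unfolding weight_def Rv_def ..
  define C where "C = (\<Prod>y\<in>SW. Rv q u w \<sigma>0 y)"
  have finSW: "finite SW" using fin_skew skew_split(1) by (metis finite_Un)
  have W: "weight q u w Q P \<sigma> = C * (\<Prod>y\<in>NN. Rv q u w \<sigma> y)" if "\<sigma> \<in> S" for \<sigma>
  proof -
    have "weight q u w Q P \<sigma> = (\<Prod>y\<in>SW. Rv q u w \<sigma> y) * (\<Prod>y\<in>NN. Rv q u w \<sigma> y)"
      unfolding wRv skew_split(1) using finSW fin_NN skew_split(2) by (rule prod.union_disjoint)
    moreover have "(\<Prod>y\<in>SW. Rv q u w \<sigma> y) = C"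
      unfolding C_def
    proof (rule prod.cong[OF refl])
      fix y assume y: "y \<in> SW"
      have "Ve y \<in> adj_edges SW" "He y \<in> adj_edges SW" "Ve (fst y, snd y + 1) \<in> adj_edges SW"
        "He (fst y + 1, snd y) \<in> adj_edges SW"
        using y unfolding adj_edges_def by (auto intro!: UN_I[where a=y] simp: case_prod_unfold)
      moreover have nn: "e \<in> adj_edges SW \<Longrightarrow> e \<notin> outs NN" for e using sw_notin by auto
      ultimately show "Rv q u w \<sigma> y = Rv q u w \<sigma>0 y"
        unfolding Rv_def using off[OF that nn] by metis
    qed
    ultimately show ?thesis by simp
  qed
  define i where "i = \<sigma>0 (Ve (a, b))"
  define j where "j = \<sigma>0 (He (a, b))"
  have in_n: "i \<le> n" "j \<le> n" unfolding i_def j_def using s0n by auto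
  have zq: "z \<noteq> x" using \<open>\<forall>v\<in>skew_domain Q P. spec u w v \<noteq> of_real q\<close> \<open>(a, b) \<in> skew_domain Q P\<close>
    unfolding z_def x_def by auto
  have core_inst: "(\<Sum>\<sigma>\<in>S. (\<Prod>y\<in>NN. Rv q u w \<sigma> y) * g (\<sigma> (top_e (a, b))) (\<sigma> (right_e (a, b)))) =
      (\<Sum>k\<le>n. \<Sum>l\<le>n. Rw z x i j k l * g k l)" for g
    unfolding Seq z_def x_def i_def j_def
    by (rule core[OF fin_NN vNN _ _ s0n, simplified])
       (use \<open>\<forall>v\<in>skew_domain Q P. spec u w v \<noteq> of_real q\<close> in \<open>auto simp: NN_def\<close>)
  have denom: "(\<Sum>\<sigma>\<in>S. weight q u w Q P \<sigma>) = C"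
  proof -
    have "(\<Sum>\<sigma>\<in>S. weight q u w Q P \<sigma>) = C * (\<Sum>\<sigma>\<in>S. (\<Prod>y\<in>NN. Rv q u w \<sigma> y) * (\<lambda>_ _. 1) (\<sigma> (top_e (a, b))) (\<sigma> (right_e (a, b))))"
      by (simp add: W sum_distrib_left)
    also have "\<dots> = C" using core_inst[of "\<lambda>_ _. 1"] Rw_stoch[OF in_n zq] by simp
    finally show ?thesis .
  qed
  have Cnz: "C \<noteq> 0" using denom \<open>(\<Sum>\<sigma>\<in>S. weight q u w Q P \<sigma>) \<noteq> 0\<close> by simp
  have hS: "height Q col \<sigma> c (a, b) = hSE c + ind c (\<sigma> (right_e (a, b)))" if "\<sigma> \<in> S" for \<sigma> c
    using h_top[of col \<sigma> c] h_agree(1)[of \<sigma> \<sigma>0 col c] off[OF that] unfolding hSE_def right_e_def by auto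
  define g where "g k l = x ^ (\<Sum>t<r. (hSE (cs ! t) + ind (cs ! t) l))" for k l :: nat
  have X: "x ^ (\<Sum>t<r. height Q col \<sigma> (cs ! t) (a, b)) = g (\<sigma> (top_e (a, b))) (\<sigma> (right_e (a, b)))"
    if "\<sigma> \<in> S" for \<sigma>
    unfolding g_def using hS[OF that] by simp
  have num: "(\<Sum>\<sigma>\<in>S. weight q u w Q P \<sigma> * x ^ (\<Sum>t<r. height Q col \<sigma> (cs ! t) (a, b))) =
      C * (\<Sum>k\<le>n. \<Sum>l\<le>n. Rw z x i j k l * g k l)"
  proof -
    have "(\<Sum>\<sigma>\<in>S. weight q u w Q P \<sigma> * x ^ (\<Sum>t<r. height Q col \<sigma> (cs ! t) (a, b))) =
        (\<Sum>\<sigma>\<in>S. C * ((\<Prod>y\<in>NN. Rv q u w \<sigma> y) * g (\<sigma> (top_e (a, b))) (\<sigma> (right_e (a, b)))))"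
      by (rule sum.cong[OF refl]) (simp add: W X mult.assoc)
    also have "\<dots> = C * (\<Sum>k\<le>n. \<Sum>l\<le>n. Rw z x i j k l * g k l)"
      by (simp add: sum_distrib_left[symmetric] core_inst)
    finally show ?thesis .
  qed
  have ce: "cond_exp (weight q u w Q P) S (\<lambda>\<sigma>. x ^ (\<Sum>t<r. height Q col \<sigma> (cs ! t) (a, b))) =
      (\<Sum>k\<le>n. \<Sum>l\<le>n. Rw z x i j k l * g k l)"
    unfolding cond_exp_def num denom using Cnz by simp
  obtain \<sigma>1 where \<sigma>1: "\<sigma>1 \<in> S" "weight q u w Q P \<sigma>1 \<noteq> 0"
    using \<open>(\<Sum>\<sigma>\<in>S. weight q u w Q P \<sigma>) \<noteq> 0\<close> by (meson sum.neutral)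
  have cfg1: "\<sigma>1 \<in> configs n Q P col" using \<sigma>1(1) unfolding S_def by simp
  have cons: "\<forall>y\<in>skew_domain Q P. ind c (\<sigma>1 (Ve y)) + ind c (\<sigma>1 (He y)) =
        ind c (\<sigma>1 (Ve (fst y, snd y + 1))) + ind c (\<sigma>1 (He (fst y + 1, snd y)))" for c
  proof
    fix y assume y: "y \<in> skew_domain Q P"
    have "Rv q u w \<sigma>1 y \<noteq> 0" using \<sigma>1(2) y fin_skew unfolding wRv by (simp add: prod_zero_iff)
    then show "ind c (\<sigma>1 (Ve y)) + ind c (\<sigma>1 (He y)) =
        ind c (\<sigma>1 (Ve (fst y, snd y + 1))) + ind c (\<sigma>1 (He (fst y + 1, snd y)))"
      unfolding Rv_def by (drule_tac Rw_nz) auto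
  qed
  have off01: "\<forall>e. e \<notin> outs NN \<longrightarrow> \<sigma>0 e = \<sigma>1 e" using off[OF \<sigma>1(1)] by auto
  have Ve_notin: "Ve (a, b) \<notin> outs NN" unfolding outs_def NN_def top_e_def right_e_def by auto
  have hSW_eq: "hSW c = hSE c + ind c i" for c
  proof -
    have "hSW c = height Q col \<sigma>1 c (a - 1, b - 1)" unfolding hSW_def by (rule h_agree(2)[OF off01])
    also have "\<dots> = height Q col \<sigma>1 c (a, b - 1) + ind c (\<sigma>1 (Ve (a, b)))" by (rule h_SW[OF cfg1 cons])
    also have "\<dots> = hSE c + ind c i"
      unfolding hSE_def i_def using h_agree(1)[OF off01, of col c] off01 Ve_notin by simp
    finally show ?thesis .
  qed
  have hNW_eq: "hNW c = hSW c + ind c j" for c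
    unfolding hNW_def hSW_def j_def by (rule h_NW)
  have "\<forall>l. \<exists>A \<le> length cs. \<forall>t < length cs. (cs ! t < l \<longleftrightarrow> t < A)"
    using prefix_ex[OF \<open>sorted cs\<close>] by blast
  then obtain T where T: "\<And>l. T l \<le> r" "\<And>l t. t < r \<Longrightarrow> (cs ! t < l \<longleftrightarrow> t < T l)"
    unfolding r_def by metis
  have indT: "ind (cs ! t) l = (if t < T l then 1 else 0)" if "t < r" for t l
    unfolding ind_def using T(2)[OF that] by simp
  define H where "H = (\<Sum>t<r. hSE (cs ! t))"
  have g_eq: "g k l = x ^ H * x ^ T l" for k l
  proof -
    have "(\<Sum>t<r. (hSE (cs ! t) + ind (cs ! t) l)) = H + (\<Sum>t<r. if t < T l then 1 else 0)"
      unfolding H_def sum.distrib using indT by simp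
    also have "(\<Sum>t<r. (if t < T l then 1 else 0 :: nat)) = T l"
      using sum_if_prefix[OF T(1), where f="\<lambda>_. 1::nat"] by simp
    finally show ?thesis unfolding g_def by (simp add: power_add)
  qed
  have remH: "(\<Sum>t\<in>{..<r} - {i'}. hSE (cs ! t)) + hSE (cs ! i') = H" if "i' < r" for i'
    unfolding H_def using sum.remove[of "{..<r}" i' "\<lambda>t. hSE (cs ! t)"] that by simp
  define A where "A = T i"
  define B where "B = T j"
  have AB: "A \<le> r" "B \<le> r" unfolding A_def B_def using T(1) by auto
  have sumSW: "(\<Sum>i'<r. x ^ (i' + (\<Sum>t\<in>{..<r} - {i'}. hSE (cs ! t)) + hSW (cs ! i'))) =
      x ^ H * (\<Sum>t<r. x ^ (t + (if t < A then 1 else 0)))"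
    unfolding sum_distrib_left
  proof (rule sum.cong[OF refl])
    fix i' assume "i' \<in> {..<r}"
    then have i': "i' < r" by simp
    have e: "i' + (\<Sum>t\<in>{..<r} - {i'}. hSE (cs ! t)) + hSW (cs ! i') = H + (i' + (if i' < A then 1 else 0))"
      using remH[OF i'] hSW_eq[of "cs ! i'"] indT[OF i', of i] unfolding A_def by simp
    show "x ^ (i' + (\<Sum>t\<in>{..<r} - {i'}. hSE (cs ! t)) + hSW (cs ! i')) =
        x ^ H * x ^ (i' + (if i' < A then 1 else 0))" unfolding e by (rule power_add)
  qed
  have sumNW: "(\<Sum>i'<r. x ^ (i' + (\<Sum>t\<in>{..<r} - {i'}. hSE (cs ! t)) + hNW (cs ! i'))) =
      x ^ H * (\<Sum>t<r. x ^ (t + (if t < A then 1 else 0) + (if t < B then 1 else 0)))"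
    unfolding sum_distrib_left
  proof (rule sum.cong[OF refl])
    fix i' assume "i' \<in> {..<r}"
    then have i': "i' < r" by simp
    have e: "i' + (\<Sum>t\<in>{..<r} - {i'}. hSE (cs ! t)) + hNW (cs ! i') =
        H + (i' + (if i' < A then 1 else 0) + (if i' < B then 1 else 0))"
      using remH[OF i'] hNW_eq[of "cs ! i'"] hSW_eq[of "cs ! i'"] indT[OF i', of i] indT[OF i', of j]
      unfolding A_def B_def by simp
    show "x ^ (i' + (\<Sum>t\<in>{..<r} - {i'}. hSE (cs ! t)) + hNW (cs ! i')) =
        x ^ H * x ^ (i' + (if i' < A then 1 else 0) + (if i' < B then 1 else 0))" unfolding e by (rule power_add)
  qed
  have Tmono: "T l \<le> T l'" if "l \<le> l'" for l l'
  proof (rule ccontr)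
    assume "\<not> T l \<le> T l'"
    then have lt: "T l' < T l" by simp
    then have "T l' < r" using T(1)[of l] by simp
    then have "cs ! T l' < l" using T(2)[of "T l'" l] lt by simp
    then have "cs ! T l' < l'" using that by simp
    then show False using T(2)[of "T l'" l'] \<open>T l' < r\<close> by simp
  qed
  define U where "U = (\<Sum>t<r. x ^ t)"
  have hU: "(1 - x) * U = 1 - x ^ r" unfolding U_def by (simp add: one_diff_power_eq)
  have S1: "(\<Sum>t<r. x ^ (t + (if t < A then 1 else 0))) = U + (x ^ A - 1)"
    unfolding U_def by (rule S1_eq[OF AB(1)])
  have xz: "x \<noteq> z" using zq by simp
  have goal': "(\<Sum>k\<le>n. \<Sum>l\<le>n. Rw z x i j k l * g k l) =
      (x - x ^ r * z) / (x - z) * x ^ H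
    + (x * z - 1) / (x - z) * (x ^ H * (U + (x ^ A - 1)))
    + (1 - z) / (x - z) * (x ^ H * (\<Sum>t<r. x ^ (t + (if t < A then 1 else 0) + (if t < B then 1 else 0))))"
  proof (cases "i = j")
    case True
    then have BA: "B = A" unfolding A_def B_def by simp
    have S2: "(\<Sum>t<r. x ^ (t + (if t < A then 1 else 0) + (if t < B then 1 else 0))) = U + (x ^ A - 1) + x * (x ^ A - 1)"
      unfolding U_def BA by (rule S2_eq[OF order.refl AB(1)])
    show ?thesis unfolding Rw_stoch_gen[OF in_n] S2 using True
      alg2(1)[OF xz hU, where pA="x ^ A" and h="x ^ H"] by (simp add: g_eq A_def)
  next
    case False
    show ?thesis
    proof (cases "j < i")
      case True
      have BA: "B \<le> A" unfolding A_def B_def using Tmono True by simp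
      have S2: "(\<Sum>t<r. x ^ (t + (if t < A then 1 else 0) + (if t < B then 1 else 0))) = U + (x ^ A - 1) + x * (x ^ B - 1)"
        unfolding U_def by (rule S2_eq[OF BA AB(1)])
      show ?thesis unfolding Rw_stoch_gen[OF in_n] S2 using True False
        alg2(2)[OF xz hU, where pA="x ^ A" and h="x ^ H" and pB="x ^ B"] by (simp add: g_eq A_def B_def)
    next
      case ji: False
      have BA: "A \<le> B" unfolding A_def B_def using Tmono ji by simp
      have "(\<Sum>t<r. x ^ (t + (if t < A then 1 else 0) + (if t < B then 1 else 0))) =
          (\<Sum>t<r. x ^ (t + (if t < B then 1 else 0) + (if t < A then 1 else 0)))"
        by (simp add: add_ac)
      also have "\<dots> = U + (x ^ B - 1) + x * (x ^ A - 1)"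
        unfolding U_def by (rule S2_eq[OF BA AB(2)])
      finally have S2: "(\<Sum>t<r. x ^ (t + (if t < A then 1 else 0) + (if t < B then 1 else 0))) = U + (x ^ B - 1) + x * (x ^ A - 1)" .
      show ?thesis unfolding Rw_stoch_gen[OF in_n] S2 using ji False
        alg2(3)[OF xz hU, where pA="x ^ A" and h="x ^ H" and pB="x ^ B"] by (simp add: g_eq A_def B_def)
    qed
  qed
  show ?thesis
    unfolding x_def[symmetric] ce sumSW sumNW S1 goal' H_def[symmetric] by simp
qed

end
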